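(* Let $d\geqslant1$, let $u_1,\dots,u_d\in\mathbb{Z}^d$ satisfy no nontrivial $\mathbb{Z}$-linear relation, $\mathcal{L}=\mathbb{Z}u_1+\dots+\mathbb{Z}u_d$, and let $(\mathscr{Q}_1,\mathcal{Q})$ be an ordered pair of two nonempty disjoint subsets of $\mathbb{Z}^d/\mathcal{L}$. Then: (1) $(\mathscr{Q}_1,\mathcal{Q})$ admits a minimal complement if and only if $(\bar v+\mathscr{Q}_1,\bar v+\mathcal{Q})$ admits a minimal complement for every $\bar v\in\mathbb{Z}^d/\mathcal{L}$. (2) If $\mathscr{Q}_1\cup\mathcal{Q}$ is a translate of a subgroup of $\mathbb{Z}^d/\mathcal{L}$, then $(\mathscr{Q}_1,\mathcal{Q})$ admits a minimal complement in $\mathbb{Z}^d/\mathcal{L}$. (3) If every nontrivial element of $\mathbb{Z}^d/\mathcal{L}$ has order two and either (a) each of $\mathscr{Q}_1,\mathcal{Q}$ is a singleton, or (b) the complement of $\mathscr{Q}_1\cup\mathcal{Q}$ in $\mathbb{Z}^d/\mathcal{L}$ is a singleton, then $(\mathscr{Q}_1,\mathcal{Q})$ admits a minimal complement.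
   Context: An ordered pair $(\mathscr{Q}_1,\mathcal{Q})$ of two nonempty disjoint subsets of the finite abelian group $\mathbb{Z}^d/\mathcal{L}$ admits a minimal complement in $\mathbb{Z}^d/\mathcal{L}$ if there is a nonempty $\mathcal{N}\subseteq\mathbb{Z}^d/\mathcal{L}$ with (i) $\mathcal{N}+(\mathcal{Q}\cup\mathscr{Q}_1)=\mathbb{Z}^d/\mathcal{L}$ and (ii) for every $n\in\mathcal{N}$ there is $q\in\mathscr{Q}_1$ with $n+q\neq n'+q'$ for all $n'\in\mathcal{N}\setminus\{n\}$, $q'\in\mathcal{Q}\cup\mathscr{Q}_1$. *)

theory Defs
  imports "HOL-Analysis.Analysis"
begin

text \<open>Z^d is modelled as int^'n with 'n a finite type, d = CARD('n) \<ge> 1.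
 The lattice generated by u_i (i :: 'n).\<close>
definition lat :: "('n::finite \<Rightarrow> int^'n) \<Rightarrow> (int^'n) set" where
  "lat u = range (\<lambda>c::'n \<Rightarrow> int. \<Sum>i\<in>UNIV. c i *s u i)"

definition cls :: "(int^'n::finite) set \<Rightarrow> int^'n \<Rightarrow> (int^'n) set" where
  "cls L x = (\<lambda>l. x + l) ` L"

definition quot :: "(int^'n::finite) set \<Rightarrow> (int^'n) set set" where
  "quot L = range (cls L)"

definition qadd :: "(int^'n::finite) set \<Rightarrow> (int^'n) set \<Rightarrow> (int^'n) set" where
  "qadd A B = {a + b | a b. a \<in> A \<and> b \<in> B}"

definition qsubgroup :: "(int^'n::finite) set \<Rightarrow> (int^'n) set set \<Rightarrow> bool" where
  "qsubgroup L H \<longleftrightarrow> H \<subseteq> quot L \<and> L \<in> H \<and>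
     (\<forall>a\<in>H. \<forall>b\<in>H. qadd a b \<in> H) \<and> (\<forall>a\<in>H. uminus ` a \<in> H)"

definition admits_mc :: "(int^'n::finite) set \<Rightarrow> (int^'n) set set \<Rightarrow> (int^'n) set set \<Rightarrow> bool" where
  "admits_mc L Q1 Q \<longleftrightarrow> (\<exists>N. N \<noteq> {} \<and> N \<subseteq> quot L \<and>
      {qadd n q | n q. n \<in> N \<and> q \<in> Q \<union> Q1} = quot L \<and>
      (\<forall>n\<in>N. \<exists>q\<in>Q1. \<forall>n'\<in>N - {n}. \<forall>q'\<in>Q \<union> Q1. qadd n q \<noteq> qadd n' q'))"

end

theory Submission imports Defs begin
definition sg :: "(int^'n::finite) set \<Rightarrow> bool" where
 "sg L \<longleftrightarrow> 0 \<in> L \<and> (\<forall>x\<in>L. \<forall>y\<in>L. x + y \<in> L) \<and> (\<forall>x\<in>L. - x \<in> L)"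

lemma sg_lat: "sg (lat u)"
  unfolding sg_def lat_def
proof (intro conjI ballI)
  show "0 \<in> range (\<lambda>c. \<Sum>i\<in>UNIV. c i *s u i)"
    by (rule range_eqI[of _ _ "\<lambda>_. 0"]) simp
next
  fix x y assume "x \<in> range (\<lambda>c. \<Sum>i\<in>UNIV. c i *s u i)" "y \<in> range (\<lambda>c. \<Sum>i\<in>UNIV. c i *s u i)"
  then obtain a b where "x = (\<Sum>i\<in>UNIV. a i *s u i)" "y = (\<Sum>i\<in>UNIV. b i *s u i)" by auto
  then show "x + y \<in> range (\<lambda>c. \<Sum>i\<in>UNIV. c i *s u i)"
    by (intro range_eqI[of _ _ "\<lambda>i. a i + b i"]) (simp add: vector_sadd_rdistrib sum.distrib)
next
  fix x assume "x \<in> range (\<lambda>c. \<Sum>i\<in>UNIV. c i *s u i)"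
  then obtain a where "x = (\<Sum>i\<in>UNIV. a i *s u i)" by auto
  then show "- x \<in> range (\<lambda>c. \<Sum>i\<in>UNIV. c i *s u i)"
    by (intro range_eqI[of _ _ "\<lambda>i. - a i"]) (simp add: sum_negf[symmetric] vec_eq_iff)
qed

lemma mem_qadd: "z \<in> qadd A B \<longleftrightarrow> (\<exists>a\<in>A. \<exists>b\<in>B. z = a + b)"
  unfolding qadd_def by blast

lemma qaddI: "a \<in> A \<Longrightarrow> b \<in> B \<Longrightarrow> a + b \<in> qadd A B"
  unfolding mem_qadd by blast

lemma qadd_assoc: "qadd (qadd a b) c = qadd a (qadd b c)"
proof (rule set_eqI)
  fix z
  show "z \<in> qadd (qadd a b) c \<longleftrightarrow> z \<in> qadd a (qadd b c)"
  proof
    assume "z \<in> qadd (qadd a b) c"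
    then obtain x y w where xyw: "x \<in> a" "y \<in> b" "w \<in> c" and z: "z = (x + y) + w" by (auto simp: mem_qadd)
    have "z = x + (y + w)" using z by (simp add: add.assoc)
    then show "z \<in> qadd a (qadd b c)" using qaddI[OF xyw(1) qaddI[OF xyw(2,3)]] by simp
  next
    assume "z \<in> qadd a (qadd b c)"
    then obtain x y w where xyw: "x \<in> a" "y \<in> b" "w \<in> c" and z: "z = x + (y + w)" by (auto simp: mem_qadd)
    have "z = (x + y) + w" using z by (simp add: add.assoc)
    then show "z \<in> qadd (qadd a b) c" using qaddI[OF qaddI[OF xyw(1,2)] xyw(3)] by simp
  qed
qed

lemma qadd_comm: "qadd a b = qadd b a"
proof (rule set_eqI)
  fix z show "z \<in> qadd a b \<longleftrightarrow> z \<in> qadd b a"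
    unfolding mem_qadd using add.commute by blast
qed

interpretation qadd: abel_semigroup qadd
  by unfold_locales (rule qadd_assoc, rule qadd_comm)
lemma cls_add: assumes "sg L" shows "qadd (cls L x) (cls L y) = cls L (x + y)"
proof (rule set_eqI)
  fix z show "z \<in> qadd (cls L x) (cls L y) \<longleftrightarrow> z \<in> cls L (x + y)"
  proof
    assume "z \<in> qadd (cls L x) (cls L y)"
    then obtain l m where "l \<in> L" "m \<in> L" "z = (x + l) + (y + m)" by (auto simp: mem_qadd cls_def)
    moreover have "l + m \<in> L" using assms \<open>l \<in> L\<close> \<open>m \<in> L\<close> by (simp add: sg_def)
    ultimately show "z \<in> cls L (x + y)" unfolding cls_def
      by (intro image_eqI[of _ _ "l + m"]) (simp_all add: algebra_simps)
  next
    assume "z \<in> cls L (x + y)"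
    then obtain l where l: "l \<in> L" "z = (x + y) + l" by (auto simp: cls_def)
    have "x + l \<in> cls L x" "y + 0 \<in> cls L y" using l assms by (auto simp: cls_def sg_def)
    from qaddI[OF this] show "z \<in> qadd (cls L x) (cls L y)" using l by (simp add: algebra_simps)
  qed
qed

lemma cls_0: "cls L 0 = L"
  by (simp add: cls_def)

lemma cls_neg: assumes "sg L" shows "uminus ` cls L x = cls L (- x)"
proof (rule set_eqI)
  fix z show "z \<in> uminus ` cls L x \<longleftrightarrow> z \<in> cls L (- x)"
  proof
    assume "z \<in> uminus ` cls L x"
    then obtain l where "l \<in> L" "z = - (x + l)" by (auto simp: cls_def)
    moreover have "- l \<in> L" using assms \<open>l \<in> L\<close> by (simp add: sg_def)
    ultimately show "z \<in> cls L (- x)" unfolding cls_def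
      by (intro image_eqI[of _ _ "- l"]) simp_all
  next
    assume "z \<in> cls L (- x)"
    then obtain l where "l \<in> L" "z = - x + l" by (auto simp: cls_def)
    moreover have "- l \<in> L" using assms \<open>l \<in> L\<close> by (simp add: sg_def)
    ultimately have "x + - l \<in> cls L x" "z = - (x + - l)" by (auto simp: cls_def)
    then show "z \<in> uminus ` cls L x" by blast
  qed
qed

lemma L_quot: "L \<in> quot L"
  unfolding quot_def using cls_0[of L] by (metis rangeI)

lemma quotE: "a \<in> quot L \<Longrightarrow> (\<And>x. a = cls L x \<Longrightarrow> P) \<Longrightarrow> P"
  unfolding quot_def by blast

lemma quot_add: "sg L \<Longrightarrow> a \<in> quot L \<Longrightarrow> b \<in> quot L \<Longrightarrow> qadd a b \<in> quot L"
  by (auto simp: quot_def cls_add)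

lemma quot_neg: "sg L \<Longrightarrow> a \<in> quot L \<Longrightarrow> uminus ` a \<in> quot L"
  by (auto simp: quot_def cls_neg)

lemma qadd_L: assumes "sg L" "a \<in> quot L" shows "qadd L a = a"
proof -
  obtain x where "a = cls L x" using assms(2) by (auto simp: quot_def)
  then show ?thesis using cls_add[OF assms(1), of 0 x] by (simp add: cls_0)
qed

lemma qadd_L2: "sg L \<Longrightarrow> a \<in> quot L \<Longrightarrow> qadd a L = a"
  using qadd_L[of L a] qadd_comm[of a L] by simp

lemma qadd_neg: assumes "sg L" "a \<in> quot L" shows "qadd a (uminus ` a) = L"
proof -
  obtain x where "a = cls L x" using assms(2) by (auto simp: quot_def)
  then show ?thesis using cls_add[OF assms(1), of x "-x"] cls_neg[OF assms(1), of x] by (simp add: cls_0)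
qed

lemma qadd_cancel: assumes "sg L" "a \<in> quot L" "x \<in> quot L" "y \<in> quot L" "qadd a x = qadd a y"
  shows "x = y"
proof -
  have e: "qadd (uminus ` a) a = L" using qadd_neg[OF assms(1,2)] qadd_comm[of "uminus ` a" a] by simp
  have "x = qadd (qadd (uminus ` a) a) x" using e qadd_L[OF assms(1,3)] by simp
  also have "\<dots> = qadd (uminus ` a) (qadd a y)" using assms(5) by (simp add: qadd.assoc)
  also have "\<dots> = y" using e qadd_L[OF assms(1,4)] by (simp flip: qadd.assoc)
  finally show ?thesis .
qed

lemma admits_mcI:
  assumes "N \<noteq> {}" "N \<subseteq> quot L" "{qadd n q | n q. n \<in> N \<and> q \<in> Q \<union> Q1} = quot L"
    "\<forall>n\<in>N. \<exists>q\<in>Q1. \<forall>n'\<in>N - {n}. \<forall>q'\<in>Q \<union> Q1. qadd n q \<noteq> qadd n' q'"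
  shows "admits_mc L Q1 Q"
  unfolding admits_mc_def by (rule exI[of _ N], intro conjI; rule assms)

lemma admits_mcE:
  assumes "admits_mc L Q1 Q"
  obtains N where "N \<noteq> {}" "N \<subseteq> quot L" "{qadd n q | n q. n \<in> N \<and> q \<in> Q \<union> Q1} = quot L"
    "\<forall>n\<in>N. \<exists>q\<in>Q1. \<forall>n'\<in>N - {n}. \<forall>q'\<in>Q \<union> Q1. qadd n q \<noteq> qadd n' q'"
  using assms unfolding admits_mc_def by (elim exE conjE) (rule that)

lemma translate_mc:
  assumes L: "sg L" and v: "v \<in> quot L" and sub: "Q1 \<subseteq> quot L" "Q \<subseteq> quot L"
    and mc: "admits_mc L Q1 Q"
  shows "admits_mc L (qadd v ` Q1) (qadd v ` Q)"
proof -
  obtain N where N: "N \<noteq> {}" "N \<subseteq> quot L"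
    and cov: "{qadd n q | n q. n \<in> N \<and> q \<in> Q \<union> Q1} = quot L"
    and uq: "\<forall>n\<in>N. \<exists>q\<in>Q1. \<forall>n'\<in>N - {n}. \<forall>q'\<in>Q \<union> Q1. qadd n q \<noteq> qadd n' q'"
    using mc by (rule admits_mcE)
  define w where "w = uminus ` v"
  have w: "w \<in> quot L" using quot_neg[OF L v] by (simp add: w_def)
  have key: "qadd (qadd w n) (qadd v q) = qadd n q" if "n \<in> quot L" "q \<in> quot L" for n q
  proof -
    have "qadd (qadd w n) (qadd v q) = qadd (qadd v w) (qadd n q)"
      by (simp only: qadd.assoc qadd.commute qadd.left_commute)
    also have "\<dots> = qadd n q" using qadd_neg[OF L v] qadd_L[OF L quot_add[OF L that]] by (simp add: w_def)
    finally show ?thesis .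
  qed
  define N' where "N' = qadd w ` N"
  have "N' \<noteq> {}" using N by (simp add: N'_def)
  moreover have "N' \<subseteq> quot L" using N quot_add[OF L w] by (auto simp: N'_def)
  moreover have "{qadd n q | n q. n \<in> N' \<and> q \<in> qadd v ` Q \<union> qadd v ` Q1} = quot L"
  proof -
    have "{qadd n q | n q. n \<in> N' \<and> q \<in> qadd v ` Q \<union> qadd v ` Q1}
        = {qadd n q | n q. n \<in> N \<and> q \<in> Q \<union> Q1}"
    proof (rule set_eqI, rule iffI)
      fix z assume "z \<in> {qadd n q | n q. n \<in> N' \<and> q \<in> qadd v ` Q \<union> qadd v ` Q1}"
      then obtain n0 q0 where z0: "z = qadd n0 q0" "n0 \<in> N'" "q0 \<in> qadd v ` Q \<union> qadd v ` Q1" by blast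
      obtain n where n: "n \<in> N" "n0 = qadd w n" using z0(2) unfolding N'_def by blast
      have "q0 \<in> qadd v ` (Q \<union> Q1)" using z0(3) by (simp only: image_Un)
      then obtain q where q: "q \<in> Q \<union> Q1" "q0 = qadd v q" by blast
      have nq: "n \<in> N" "q \<in> Q \<union> Q1" "z = qadd (qadd w n) (qadd v q)" using n q z0 by simp_all
      have nqq: "n \<in> quot L" "q \<in> quot L" using nq N sub by auto
      have "z = qadd n q" using nq(3) key[OF nqq] by (rule trans)
      then show "z \<in> {qadd n q | n q. n \<in> N \<and> q \<in> Q \<union> Q1}" using nq(1,2) by blast
    next
      fix z assume "z \<in> {qadd n q | n q. n \<in> N \<and> q \<in> Q \<union> Q1}"
      then obtain n q where nq: "n \<in> N" "q \<in> Q \<union> Q1" "z = qadd n q" by blast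
      have nqq: "n \<in> quot L" "q \<in> quot L" using nq N sub by auto
      have "z = qadd (qadd w n) (qadd v q)" using key[OF nqq] nq(3) by simp
      moreover have "qadd w n \<in> N'" "qadd v q \<in> qadd v ` Q \<union> qadd v ` Q1" using nq by (auto simp: N'_def)
      ultimately show "z \<in> {qadd n q | n q. n \<in> N' \<and> q \<in> qadd v ` Q \<union> qadd v ` Q1}" by blast
    qed
    then show ?thesis using cov by simp
  qed
  moreover have "\<forall>n\<in>N'. \<exists>q\<in>qadd v ` Q1. \<forall>n'\<in>N' - {n}. \<forall>q'\<in>qadd v ` Q \<union> qadd v ` Q1. qadd n q \<noteq> qadd n' q'"
  proof
    fix n0 assume "n0 \<in> N'"
    then obtain n where n: "n \<in> N" "n0 = qadd w n" by (auto simp: N'_def)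
    obtain q where q: "q \<in> Q1" "\<forall>n'\<in>N - {n}. \<forall>q'\<in>Q \<union> Q1. qadd n q \<noteq> qadd n' q'" using uq n by blast
    show "\<exists>q\<in>qadd v ` Q1. \<forall>n'\<in>N' - {n0}. \<forall>q'\<in>qadd v ` Q \<union> qadd v ` Q1. qadd n0 q \<noteq> qadd n' q'"
    proof (intro bexI[of _ "qadd v q"] ballI)
      show "qadd v q \<in> qadd v ` Q1" using q by simp
      fix m0 r0 assume m0: "m0 \<in> N' - {n0}" and r0: "r0 \<in> qadd v ` Q \<union> qadd v ` Q1"
      obtain m where m: "m \<in> N" "m0 = qadd w m" using m0 by (auto simp: N'_def)
      obtain r where r: "r \<in> Q \<union> Q1" "r0 = qadd v r" using r0 by blast
      have "m \<noteq> n" using m n m0 by auto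
      then have "qadd n q \<noteq> qadd m r" using q(2) m(1) r(1) by blast
      moreover have "qadd n0 (qadd v q) = qadd n q"
      proof -
        have "n \<in> quot L" "q \<in> quot L" using n q N sub by auto
        from key[OF this] show ?thesis using n(2) by simp
      qed
      moreover have "qadd m0 r0 = qadd m r"
      proof -
        have "m \<in> quot L" "r \<in> quot L" using m r N sub by auto
        from key[OF this] show ?thesis using m(2) r(2) by simp
      qed
      ultimately show "qadd n0 (qadd v q) \<noteq> qadd m0 r0" by simp
    qed
  qed
  ultimately show ?thesis by (rule admits_mcI)
qed

lemma subgroup_mc:
  assumes L: "sg L" and v: "v \<in> quot L" and H: "qsubgroup L H"
    and QH: "Q1 \<union> Q = qadd v ` H" and ne: "Q1 \<noteq> {}"
  shows "admits_mc L Q1 Q"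
proof -
  have Hq: "H \<subseteq> quot L" and HL: "L \<in> H" and Hadd: "\<And>a b. a \<in> H \<Longrightarrow> b \<in> H \<Longrightarrow> qadd a b \<in> H"
    and Hneg: "\<And>a. a \<in> H \<Longrightarrow> uminus ` a \<in> H"
    using H unfolding qsubgroup_def by blast+
  define R where "R g = qadd g ` H" for g
  define rep where "rep g = (SOME r. r \<in> R g)" for g
  have gR: "g \<in> R g" if "g \<in> quot L" for g
    using qadd_L2[OF L that] HL unfolding R_def by force
  have rep: "rep g \<in> R g" if "g \<in> quot L" for g
    unfolding rep_def using gR[OF that] by (rule someI)
  have Hshift: "qadd h ` H = H" if "h \<in> H" for h
  proof
    show "qadd h ` H \<subseteq> H" using Hadd that by blast
    show "H \<subseteq> qadd h ` H"
    proof
      fix k assume k: "k \<in> H"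
      have hq: "h \<in> quot L" "k \<in> quot L" using Hq that k by auto
      have "qadd h (qadd (uminus ` h) k) = qadd (qadd h (uminus ` h)) k" by (simp only: qadd.assoc)
      also have "\<dots> = k" using qadd_neg[OF L hq(1)] qadd_L[OF L hq(2)] by simp
      finally have "qadd h (qadd (uminus ` h) k) = k" .
      moreover have "qadd (uminus ` h) k \<in> H" using Hadd Hneg that k by blast
      ultimately show "k \<in> qadd h ` H" by (metis image_eqI)
    qed
  qed
  have Rsame: "R r = R g" if rg: "r \<in> R g" for r g
  proof -
    obtain h where h: "h \<in> H" "r = qadd g h" using rg unfolding R_def by blast
    have "R r = (\<lambda>k. qadd g (qadd h k)) ` H" unfolding R_def h(2) by (simp add: qadd.assoc image_image)
    also have "\<dots> = qadd g ` (qadd h ` H)" by (simp add: image_image)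
    also have "\<dots> = R g" using Hshift[OF h(1)] by (simp add: R_def)
    finally show ?thesis .
  qed
  have Rq: "R g \<subseteq> quot L" if "g \<in> quot L" for g
    using quot_add[OF L that] Hq unfolding R_def by blast
  define N where "N = rep ` quot L"
  have Nq: "N \<subseteq> quot L" unfolding N_def using rep Rq by blast
  have "N \<noteq> {}" unfolding N_def using L_quot by blast
  moreover have "{qadd n q | n q. n \<in> N \<and> q \<in> Q \<union> Q1} = quot L"
  proof
    show "{qadd n q | n q. n \<in> N \<and> q \<in> Q \<union> Q1} \<subseteq> quot L"
    proof
      fix z assume "z \<in> {qadd n q | n q. n \<in> N \<and> q \<in> Q \<union> Q1}"
      then obtain n q where nq: "n \<in> N" "q \<in> Q \<union> Q1" "z = qadd n q" by blast
      obtain h where "h \<in> H" "q = qadd v h" using nq(2) QH by blast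
      then have "q \<in> quot L" using quot_add[OF L v] Hq by blast
      moreover have "n \<in> quot L" using nq(1) Nq by blast
      ultimately show "z \<in> quot L" using quot_add[OF L] nq(3) by simp
    qed
    show "quot L \<subseteq> {qadd n q | n q. n \<in> N \<and> q \<in> Q \<union> Q1}"
    proof
      fix x assume x: "x \<in> quot L"
      define g where "g = qadd x (uminus ` v)"
      have g: "g \<in> quot L" unfolding g_def using quot_add[OF L x quot_neg[OF L v]] .
      obtain h where h: "h \<in> H" "rep g = qadd g h" using rep[OF g] unfolding R_def by blast
      have hq: "h \<in> quot L" using h Hq by blast
      have e: "rep g = qadd (qadd x (uminus ` v)) h" using h(2) by (simp add: g_def)
      have "qadd (rep g) (qadd v (uminus ` h)) = qadd x (qadd (qadd v (uminus ` v)) (qadd h (uminus ` h)))"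
        unfolding e by (simp only: qadd.assoc qadd.commute qadd.left_commute)
      also have "\<dots> = x" using qadd_neg[OF L v] qadd_neg[OF L hq] qadd_L[OF L L_quot] qadd_L2[OF L x] by simp
      finally have "x = qadd (rep g) (qadd v (uminus ` h))" by simp
      moreover have "rep g \<in> N" using g by (simp add: N_def)
      moreover have "qadd v (uminus ` h) \<in> Q \<union> Q1" using QH Hneg[OF h(1)] by blast
      ultimately show "x \<in> {qadd n q | n q. n \<in> N \<and> q \<in> Q \<union> Q1}" by blast
    qed
  qed
  moreover have "\<forall>n\<in>N. \<exists>q\<in>Q1. \<forall>n'\<in>N - {n}. \<forall>q'\<in>Q \<union> Q1. qadd n q \<noteq> qadd n' q'"
  proof
    fix n assume n: "n \<in> N"
    obtain q where q: "q \<in> Q1" using ne by blast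
    show "\<exists>q\<in>Q1. \<forall>n'\<in>N - {n}. \<forall>q'\<in>Q \<union> Q1. qadd n q \<noteq> qadd n' q'"
    proof (intro bexI[OF _ q] ballI notI)
      fix n' q' assume n': "n' \<in> N - {n}" and q': "q' \<in> Q \<union> Q1" and eq: "qadd n q = qadd n' q'"
      obtain h where h: "h \<in> H" "q = qadd v h" using q QH by blast
      obtain h' where h': "h' \<in> H" "q' = qadd v h'" using q' QH by blast
      obtain g where g: "g \<in> quot L" "n = rep g" using n N_def by blast
      obtain g' where g': "g' \<in> quot L" "n' = rep g'" using n' N_def by blast
      have nq: "n \<in> quot L" "n' \<in> quot L" using n n' Nq by auto
      have hq: "h \<in> quot L" "h' \<in> quot L" using h h' Hq by auto
      have "qadd v (qadd n h) = qadd v (qadd n' h')" using eq h h' by (simp only: qadd.assoc qadd.commute qadd.left_commute)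
      then have e2: "qadd n h = qadd n' h'"
        by (rule qadd_cancel[OF L v quot_add[OF L nq(1) hq(1)] quot_add[OF L nq(2) hq(2)]])
      have "n = qadd (qadd n h) (uminus ` h)"
        using qadd_neg[OF L hq(1)] qadd_L2[OF L nq(1)] by (simp add: qadd.assoc)
      also have "\<dots> = qadd n' (qadd h' (uminus ` h))" using e2 by (simp add: qadd.assoc)
      finally have "n \<in> R n'" unfolding R_def using Hadd[OF h'(1) Hneg[OF h(1)]] by blast
      then have "R n = R n'" by (rule Rsame)
      moreover have "R n = R g" using rep[OF g(1)] g(2) Rsame by simp
      moreover have "R n' = R g'" using rep[OF g'(1)] g'(2) Rsame by simp
      ultimately have "rep g = rep g'" unfolding rep_def by simp
      then show False using g g' n' by simp
    qed
  qed
  ultimately show ?thesis using Nq by (intro admits_mcI)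
qed

lemma exp2_mc:
  assumes L: "sg L" and ex2: "\<forall>x\<in>quot L. x \<noteq> L \<longrightarrow> qadd x x = L"
    and sub: "Q1 \<subseteq> quot L" "Q \<subseteq> quot L" and ne: "Q1 \<noteq> {}"
    and cc: "quot L - (Q1 \<union> Q) = {c}"
  shows "admits_mc L Q1 Q"
proof -
  have xx: "qadd x x = L" if "x \<in> quot L" for x
    using ex2 that qadd_L[OF L L_quot] by (cases "x = L") auto
  have flip: "y = qadd d z" if "d \<in> quot L" "y \<in> quot L" "qadd d y = z" for d y z
  proof -
    have "qadd d z = qadd (qadd d d) y" using that(3) by (simp add: qadd.assoc)
    also have "\<dots> = y" using xx[OF that(1)] qadd_L[OF L that(2)] by simp
    finally show ?thesis by simp
  qed
  have c: "c \<in> quot L" using cc by blast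
  have S: "x \<in> Q1 \<union> Q \<longleftrightarrow> x \<in> quot L \<and> x \<noteq> c" for x
    using cc sub by blast
  obtain q where q: "q \<in> Q1" using ne by blast
  have qq: "q \<in> quot L" "q \<noteq> c" using q S by auto
  define d where "d = qadd q c"
  have dq: "d \<in> quot L" using quot_add[OF L qq(1) c] by (simp add: d_def)
  have dL: "d \<noteq> L"
  proof
    assume "d = L"
    then have "qadd q c = L" by (simp add: d_def)
    then have "c = qadd q L" using flip[OF qq(1) c] by simp
    then show False using qadd_L2[OF L qq(1)] qq(2) by simp
  qed
  have dqc: "qadd d q = c"
  proof -
    have "qadd d q = qadd (qadd q q) c" unfolding d_def by (simp only: qadd.assoc qadd.commute qadd.left_commute)
    then show ?thesis using xx[OF qq(1)] qadd_L[OF L c] by simp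
  qed
  define N where "N = {L, d}"
  have Nq: "N \<subseteq> quot L" using L_quot dq by (simp add: N_def)
  have "N \<noteq> {}" by (simp add: N_def)
  moreover have "{qadd n q | n q. n \<in> N \<and> q \<in> Q \<union> Q1} = quot L"
  proof
    show "{qadd n q | n q. n \<in> N \<and> q \<in> Q \<union> Q1} \<subseteq> quot L"
    proof
      fix z assume "z \<in> {qadd n q | n q. n \<in> N \<and> q \<in> Q \<union> Q1}"
      then obtain n r where nr: "n \<in> N" "r \<in> Q \<union> Q1" "z = qadd n r" by blast
      have "n \<in> quot L" "r \<in> quot L" using nr Nq sub by auto
      then show "z \<in> quot L" using quot_add[OF L] nr(3) by simp
    qed
    show "quot L \<subseteq> {qadd n q | n q. n \<in> N \<and> q \<in> Q \<union> Q1}"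
    proof
      fix x assume x: "x \<in> quot L"
      show "x \<in> {qadd n q | n q. n \<in> N \<and> q \<in> Q \<union> Q1}"
      proof (cases "x = c")
        case True
        then have "x = qadd d q" using dqc by simp
        moreover have "d \<in> N" "q \<in> Q \<union> Q1" using q by (auto simp: N_def)
        ultimately show ?thesis by blast
      next
        case False
        then have "x = qadd L x" "L \<in> N" "x \<in> Q \<union> Q1" using qadd_L[OF L x] S x by (auto simp: N_def)
        then show ?thesis by blast
      qed
    qed
  qed
  moreover have "\<forall>n\<in>N. \<exists>q\<in>Q1. \<forall>n'\<in>N - {n}. \<forall>q'\<in>Q \<union> Q1. qadd n q \<noteq> qadd n' q'"
  proof
    fix n assume n: "n \<in> N"
    show "\<exists>q\<in>Q1. \<forall>n'\<in>N - {n}. \<forall>q'\<in>Q \<union> Q1. qadd n q \<noteq> qadd n' q'"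
    proof (intro bexI[OF _ q] ballI notI)
      fix n' q' assume n': "n' \<in> N - {n}" and q': "q' \<in> Q \<union> Q1" and eq: "qadd n q = qadd n' q'"
      have q'q: "q' \<in> quot L" "q' \<noteq> c" using q' S by auto
      show False
      proof (cases "n = L")
        case True
        then have "n' = d" using n' by (auto simp: N_def)
        then have "qadd d q' = q" using eq True qadd_L[OF L qq(1)] by simp
        then have "q' = qadd d q" by (rule flip[OF dq q'q(1)])
        then show False using dqc q'q(2) by simp
      next
        case False
        then have "n = d" "n' = L" using n n' by (auto simp: N_def)
        then have "qadd d q = q'" using eq qadd_L[OF L q'q(1)] by simp
        then show False using dqc q'q(2) by simp
      qed
    qed
  qed
  ultimately show ?thesis using Nq by (intro admits_mcI)
qed

lemma exp2_neg:
  assumes L: "sg L" and ex2: "\<forall>x\<in>quot L. x \<noteq> L \<longrightarrow> qadd x x = L" and x: "x \<in> quot L"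
  shows "uminus ` x = x" "qadd x x = L"
proof -
  show xx: "qadd x x = L" using ex2 x qadd_L[OF L L_quot] by (cases "x = L") auto
  have nx: "uminus ` x \<in> quot L" using quot_neg[OF L x] .
  have "uminus ` x = qadd (uminus ` x) (qadd x x)" using xx qadd_L2[OF L nx] by simp
  also have "\<dots> = qadd (qadd x (uminus ` x)) x" by (simp only: qadd.assoc qadd.commute qadd.left_commute)
  also have "\<dots> = x" using qadd_neg[OF L x] qadd_L[OF L x] by simp
  finally show "uminus ` x = x" .
qed

lemma pair_mc:
  assumes L: "sg L" and ex2: "\<forall>x\<in>quot L. x \<noteq> L \<longrightarrow> qadd x x = L"
    and a: "a \<in> quot L" and b: "b \<in> quot L"
  shows "admits_mc L {a} {b}"
proof -
  define e where "e = qadd a (uminus ` b)"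
  have e: "e \<in> quot L" unfolding e_def using quot_add[OF L a quot_neg[OF L b]] .
  have H: "qsubgroup L {L, e}"
    unfolding qsubgroup_def
  proof (intro conjI ballI)
    show "{L, e} \<subseteq> quot L" using e L_quot[of L] by simp
    show "L \<in> {L, e}" by simp
    fix x assume x: "x \<in> {L, e}"
    then have xq: "x \<in> quot L" using e L_quot[of L] by auto
    show "uminus ` x \<in> {L, e}" using exp2_neg(1)[OF L ex2 xq] x by simp
    fix y assume y: "y \<in> {L, e}"
    have ee: "qadd e e = L" "qadd L L = L" "qadd L e = e" "qadd e L = e"
      using exp2_neg(2)[OF L ex2 e] exp2_neg(2)[OF L ex2 L_quot[of L]] qadd_L[OF L e] qadd_L2[OF L e]
      by auto
    from x y show "qadd x y \<in> {L, e}"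
    proof (elim insertE emptyE)
    qed (simp_all only: ee insert_iff simp_thms)
  qed
  have "qadd b e = qadd (qadd b (uminus ` b)) a" unfolding e_def by (simp only: qadd.assoc qadd.commute qadd.left_commute)
  also have "\<dots> = a" using qadd_neg[OF L b] qadd_L[OF L a] by simp
  finally have "{a} \<union> {b} = qadd b ` {L, e}" using qadd_L2[OF L b] by auto
  then show ?thesis using subgroup_mc[OF L b H] by simp
qed

theorem lemma4p20:
  fixes u :: "'n::finite \<Rightarrow> int^'n"
    and Q1 Q :: "(int^'n) set set"
  assumes indep: "\<And>c::'n \<Rightarrow> int. (\<Sum>i\<in>UNIV. c i *s u i) = 0 \<Longrightarrow> (\<forall>i. c i = 0)"
    and Q1_sub: "Q1 \<subseteq> quot (lat u)" and Q_sub: "Q \<subseteq> quot (lat u)"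
    and Q1_ne: "Q1 \<noteq> {}" and Q_ne: "Q \<noteq> {}"
    and disj: "Q1 \<inter> Q = {}"
  shows "(admits_mc (lat u) Q1 Q \<longleftrightarrow>
            (\<forall>v\<in>quot (lat u). admits_mc (lat u) (qadd v ` Q1) (qadd v ` Q)))
       \<and> ((\<exists>v\<in>quot (lat u). \<exists>H. qsubgroup (lat u) H \<and> Q1 \<union> Q = qadd v ` H)
            \<longrightarrow> admits_mc (lat u) Q1 Q)
       \<and> (((\<forall>x\<in>quot (lat u). x \<noteq> lat u \<longrightarrow> qadd x x = lat u) \<and>
            ((\<exists>a b. Q1 = {a} \<and> Q = {b}) \<or> (\<exists>c. quot (lat u) - (Q1 \<union> Q) = {c})))
            \<longrightarrow> admits_mc (lat u) Q1 Q)"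
proof (intro conjI impI)
  have L: "sg (lat u)" by (rule sg_lat)
  show "admits_mc (lat u) Q1 Q \<longleftrightarrow>
            (\<forall>v\<in>quot (lat u). admits_mc (lat u) (qadd v ` Q1) (qadd v ` Q))"
  proof
    assume mc: "admits_mc (lat u) Q1 Q"
    show "\<forall>v\<in>quot (lat u). admits_mc (lat u) (qadd v ` Q1) (qadd v ` Q)"
    proof
      fix v assume v: "v \<in> quot (lat u)"
      show "admits_mc (lat u) (qadd v ` Q1) (qadd v ` Q)" by (rule translate_mc[OF L v Q1_sub Q_sub mc])
    qed
  next
    assume "\<forall>v\<in>quot (lat u). admits_mc (lat u) (qadd v ` Q1) (qadd v ` Q)"
    then have "admits_mc (lat u) (qadd (lat u) ` Q1) (qadd (lat u) ` Q)" using L_quot[of "lat u"] by (rule bspec)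
    moreover have "qadd (lat u) ` Q1 = id ` Q1"
    proof (rule image_cong)
      fix x assume "x \<in> Q1"
      then show "qadd (lat u) x = id x" using qadd_L[OF L, of x] Q1_sub by auto
    qed simp
    moreover have "qadd (lat u) ` Q = id ` Q"
    proof (rule image_cong)
      fix x assume "x \<in> Q"
      then show "qadd (lat u) x = id x" using qadd_L[OF L, of x] Q_sub by auto
    qed simp
    ultimately show "admits_mc (lat u) Q1 Q" by simp
  qed
  show "admits_mc (lat u) Q1 Q" if hh: "\<exists>v\<in>quot (lat u). \<exists>H. qsubgroup (lat u) H \<and> Q1 \<union> Q = qadd v ` H"
  proof -
    obtain v H where vH: "v \<in> quot (lat u)" "qsubgroup (lat u) H" "Q1 \<union> Q = qadd v ` H" using hh by blast
    show ?thesis by (rule subgroup_mc[OF L vH Q1_ne])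
  qed
  show "admits_mc (lat u) Q1 Q" if h: "(\<forall>x\<in>quot (lat u). x \<noteq> lat u \<longrightarrow> qadd x x = lat u) \<and>
            ((\<exists>a b. Q1 = {a} \<and> Q = {b}) \<or> (\<exists>c. quot (lat u) - (Q1 \<union> Q) = {c}))"
  proof -
    have ex2: "\<forall>x\<in>quot (lat u). x \<noteq> lat u \<longrightarrow> qadd x x = lat u" using h by blast
    show ?thesis
    proof (cases "\<exists>a b. Q1 = {a} \<and> Q = {b}")
      case True
      then obtain a b where ab: "Q1 = {a}" "Q = {b}" by blast
      have "a \<in> quot (lat u)" "b \<in> quot (lat u)" using ab Q1_sub Q_sub by auto
      then show ?thesis using pair_mc[OF L ex2, of a b] ab by simp
    next
      case False
      then obtain c where "quot (lat u) - (Q1 \<union> Q) = {c}" using h by blast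
      then show ?thesis by (rule exp2_mc[OF L ex2 Q1_sub Q_sub Q1_ne])
    qed
  qed
qed

end
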